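(* Let $\lambda=0$ and let $y_1,y_2\in\mathbb{R}^k$. For $i\in\{1,2\}$ with $\mathbb{P}(r(y_1,y_2)=i)>0$ let $y_i^*\in\operatorname*{argmax}_{y\in\mathcal{Y}}\mathbb{E}[g(y)\mid r(y_1,y_2)=i]$ (and if $\mathbb{P}(r(y_1,y_2)=i)=0$ let $y_i^*\in\mathcal{Y}$ be arbitrary). Then $$\mathrm{EUBO}(y_1^*,y_2^* )\;\ge\;W_0(y_1,y_2).$$
   Context: Let $\mathcal{Y}\subseteq\mathbb{R}^k$ be compact. Let $g$ be a random function on $\mathbb{R}^k$ distributed as a Gaussian process with continuous mean and covariance; all probabilities and expectations are with respect to the law of $g$. For a query $(y_1,y_2)\in\mathbb{R}^k\times\mathbb{R}^k$ the noiseless ($\lambda=0$) response is $r(y_1,y_2)=1$ if $g(y_1)>g(y_2)$ and $r(y_1,y_2)=2$ if $g(y_1)<g(y_2)$ (ties broken arbitrarily). $\mathrm{EUBO}(y_1,y_2)=\mathbb{E}[\max\{g(y_1),g(y_2)\}]$, and $$W_0(y_1,y_2)=\sum_{i\in\{1,2\}:\,\mathbb{P}(r(y_1,y_2)=i)>0}\mathbb{P}(r(y_1,y_2)=i)\max_{y\in\mathcal{Y}}\mathbb{E}[g(y)\mid r(y_1,y_2)=i],$$ where these maxima are assumed attained. *)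

theory Defs
  imports "HOL-Probability.Probability"
begin

definition gaussian_rv :: "'w measure \<Rightarrow> ('w \<Rightarrow> real) \<Rightarrow> bool" where
  "gaussian_rv M X \<longleftrightarrow> X \<in> borel_measurable M \<and>
     ((\<exists>c. AE \<omega> in M. X \<omega> = c) \<or>
      (\<exists>\<mu> \<sigma>. \<sigma> > 0 \<and> distributed M lborel X (normal_density \<mu> \<sigma>)))"

text \<open>Gaussian process: every finite-dimensional marginal is multivariate normal,
  i.e. every finite linear combination of its values is (univariate) Gaussian.\<close>
definition gaussian_process :: "'w measure \<Rightarrow> ('w \<Rightarrow> 'a \<Rightarrow> real) \<Rightarrow> bool" where
  "gaussian_process M g \<longleftrightarrow>
     (\<forall>x. (\<lambda>\<omega>. g \<omega> x) \<in> borel_measurable M) \<and>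
     (\<forall>xs cs. length xs = length cs \<longrightarrow>
        gaussian_rv M (\<lambda>\<omega>. \<Sum>i<length xs. cs ! i * g \<omega> (xs ! i)))"

definition gp_mean :: "'w measure \<Rightarrow> ('w \<Rightarrow> 'a \<Rightarrow> real) \<Rightarrow> 'a \<Rightarrow> real" where
  "gp_mean M g x = (\<integral>\<omega>. g \<omega> x \<partial>M)"

definition gp_cov :: "'w measure \<Rightarrow> ('w \<Rightarrow> 'a \<Rightarrow> real) \<Rightarrow> 'a \<Rightarrow> 'a \<Rightarrow> real" where
  "gp_cov M g x y = (\<integral>\<omega>. (g \<omega> x - gp_mean M g x) * (g \<omega> y - gp_mean M g y) \<partial>M)"

definition cond_exp_event :: "'w measure \<Rightarrow> ('w \<Rightarrow> real) \<Rightarrow> 'w set \<Rightarrow> real" where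
  "cond_exp_event M X A = (\<integral>\<omega>. indicator A \<omega> * X \<omega> \<partial>M) / measure M A"

definition resp_event :: "'w measure \<Rightarrow> ('w \<Rightarrow> nat) \<Rightarrow> nat \<Rightarrow> 'w set" where
  "resp_event M r i = {\<omega> \<in> space M. r \<omega> = i}"

definition EUBO :: "'w measure \<Rightarrow> ('w \<Rightarrow> 'a \<Rightarrow> real) \<Rightarrow> 'a \<Rightarrow> 'a \<Rightarrow> real" where
  "EUBO M g y1 y2 = (\<integral>\<omega>. max (g \<omega> y1) (g \<omega> y2) \<partial>M)"

text \<open>W_0 for the query whose (noiseless) response random variable is r;
  the maximum over Y is written as a supremum (it is assumed attained).\<close>
definition W0 :: "'w measure \<Rightarrow> ('w \<Rightarrow> 'a \<Rightarrow> real) \<Rightarrow> ('w \<Rightarrow> nat) \<Rightarrow> 'a set \<Rightarrow> real" where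
  "W0 M g r Y = (\<Sum>i\<in>{i\<in>{1,2}. measure M (resp_event M r i) > 0}.
      measure M (resp_event M r i) *
      (SUP y\<in>Y. cond_exp_event M (\<lambda>\<omega>. g \<omega> y) (resp_event M r i)))"

end

theory Submission
  imports Defs
begin

lemma gauss_integrable:
  assumes P: "prob_space M" and G: "gaussian_rv M X"
  shows "integrable M X"
proof -
  have m: "X \<in> borel_measurable M" using G by (simp add: gaussian_rv_def)
  from G consider (c) c where "AE \<omega> in M. X \<omega> = c"
    | (n) \<mu> \<sigma> where "\<sigma> > 0" "distributed M lborel X (normal_density \<mu> \<sigma>)"
    unfolding gaussian_rv_def by blast
  then show ?thesis
  proof cases
    case c
    have "integrable M (\<lambda>_. c)" using P by (simp add: prob_space.finite_measure finite_measure.integrable_const)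
    then show ?thesis using integrable_cong_AE[OF m _ c] by simp
  next
    case n
    show ?thesis
      using distributed_integrable_var[OF n(2) normal_density_nonneg integrable_normal_moment_nz_1] n(1) by simp
  qed
qed

lemma gp_integrable:
  assumes P: "prob_space M" and G: "gaussian_process M g"
  shows "integrable M (\<lambda>\<omega>. g \<omega> y)"
proof -
  have "gaussian_rv M (\<lambda>\<omega>. \<Sum>i<length [y]. [1::real] ! i * g \<omega> ([y] ! i))"
  proof -
    have H: "\<And>xs (cs::real list). length xs = length cs \<Longrightarrow>
        gaussian_rv M (\<lambda>\<omega>. \<Sum>i<length xs. cs ! i * g \<omega> (xs ! i))"
      using G unfolding gaussian_process_def by blast
    show ?thesis by (rule H) simp
  qed
  then have "gaussian_rv M (\<lambda>\<omega>. g \<omega> y)" by simp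
  then show ?thesis using gauss_integrable[OF P] by blast
qed

theorem mainTheorem6:
  fixes M :: "'w measure"
    and g :: "'w \<Rightarrow> real ^ 'k \<Rightarrow> real"
    and Y :: "(real ^ 'k) set"
    and y1 y2 ys1 ys2 :: "real ^ 'k"
    and r :: "'w \<Rightarrow> nat"
  assumes "prob_space M"
    and "compact Y"
    and "gaussian_process M g"
    and "continuous_on UNIV (gp_mean M g)"
    and "continuous_on UNIV (\<lambda>(x, y). gp_cov M g x y)"
    and "r \<in> measurable M (count_space UNIV)"
    and "\<forall>\<omega>\<in>space M. r \<omega> \<in> {1, 2}
           \<and> (g \<omega> y1 > g \<omega> y2 \<longrightarrow> r \<omega> = 1)
           \<and> (g \<omega> y1 < g \<omega> y2 \<longrightarrow> r \<omega> = 2)"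
    and "ys1 \<in> Y" and "ys2 \<in> Y"
    and "measure M (resp_event M r 1) > 0 \<longrightarrow>
           (\<forall>y\<in>Y. cond_exp_event M (\<lambda>\<omega>. g \<omega> y) (resp_event M r 1)
                   \<le> cond_exp_event M (\<lambda>\<omega>. g \<omega> ys1) (resp_event M r 1))"
    and "measure M (resp_event M r 2) > 0 \<longrightarrow>
           (\<forall>y\<in>Y. cond_exp_event M (\<lambda>\<omega>. g \<omega> y) (resp_event M r 2)
                   \<le> cond_exp_event M (\<lambda>\<omega>. g \<omega> ys2) (resp_event M r 2))"
  shows "EUBO M g ys1 ys2 \<ge> W0 M g r Y"
proof -
  note P = assms(1) and G = assms(3) and R = assms(7)
  interpret prob_space M by (rule P)
  define A where "A i = resp_event M r i" for i
  have Am: "A i \<in> sets M" for i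
  proof -
    have "A i = r -` {i} \<inter> space M" by (auto simp: A_def resp_event_def)
    then show ?thesis using measurable_sets[OF assms(6), of "{i}"] by simp
  qed
  have gi: "integrable M (\<lambda>\<omega>. g \<omega> y)" for y by (rule gp_integrable[OF P G])
  have ii: "integrable M (\<lambda>\<omega>. indicator (A i) \<omega> * g \<omega> y)" for i y
    using integrable_real_mult_indicator[OF Am gi] by (simp add: mult.commute)
  have key: "(if measure M (A i) > 0 then measure M (A i) *
      (SUP y\<in>Y. cond_exp_event M (\<lambda>\<omega>. g \<omega> y) (A i)) else 0)
      = (\<integral>\<omega>. indicator (A i) \<omega> * g \<omega> z \<partial>M)"
    if z: "z \<in> Y" and mx: "measure M (A i) > 0 \<longrightarrow>
           (\<forall>y\<in>Y. cond_exp_event M (\<lambda>\<omega>. g \<omega> y) (A i)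
                   \<le> cond_exp_event M (\<lambda>\<omega>. g \<omega> z) (A i))" for i z
  proof (cases "measure M (A i) > 0")
    case True
    have "(SUP y\<in>Y. cond_exp_event M (\<lambda>\<omega>. g \<omega> y) (A i)) = cond_exp_event M (\<lambda>\<omega>. g \<omega> z) (A i)"
      by (rule cSup_eq_maximum) (use z mx True in auto)
    then show ?thesis using True by (simp add: cond_exp_event_def)
  next
    case False
    then have "measure M (A i) = 0" using measure_nonneg[of M "A i"] by linarith
    then have "A i \<in> null_sets M" using Am by (simp add: emeasure_eq_measure null_sets_def)
    then have "AE \<omega> in M. \<omega> \<notin> A i" by (rule AE_not_in)
    then have "(\<integral>\<omega>. indicator (A i) \<omega> * g \<omega> z \<partial>M) = (\<integral>\<omega>. 0 \<partial>M)"
      using borel_measurable_integrable[OF ii[of i z]] by (intro integral_cong_AE) (auto simp: Am)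
    then show ?thesis using False by simp
  qed
  have m1: "measure M (A 1) > 0 \<longrightarrow>
           (\<forall>y\<in>Y. cond_exp_event M (\<lambda>\<omega>. g \<omega> y) (A 1)
                   \<le> cond_exp_event M (\<lambda>\<omega>. g \<omega> ys1) (A 1))"
    unfolding A_def using assms(10) .
  have m2: "measure M (A 2) > 0 \<longrightarrow>
           (\<forall>y\<in>Y. cond_exp_event M (\<lambda>\<omega>. g \<omega> y) (A 2)
                   \<le> cond_exp_event M (\<lambda>\<omega>. g \<omega> ys2) (A 2))"
    unfolding A_def using assms(11) .
  have W: "W0 M g r Y = (\<Sum>i\<in>{1::nat,2}. (if measure M (A i) > 0 then measure M (A i) *
      (SUP y\<in>Y. cond_exp_event M (\<lambda>\<omega>. g \<omega> y) (A i)) else 0))"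
    unfolding W0_def A_def by (rule sum.inter_filter) simp
  also have "\<dots> = (if measure M (A 1) > 0 then measure M (A 1) *
      (SUP y\<in>Y. cond_exp_event M (\<lambda>\<omega>. g \<omega> y) (A 1)) else 0) + (if measure M (A 2) > 0 then measure M (A 2) *
      (SUP y\<in>Y. cond_exp_event M (\<lambda>\<omega>. g \<omega> y) (A 2)) else 0)"
    by simp
  also have "\<dots> = (\<integral>\<omega>. indicator (A 1) \<omega> * g \<omega> ys1 \<partial>M) + (\<integral>\<omega>. indicator (A 2) \<omega> * g \<omega> ys2 \<partial>M)"
    by (rule arg_cong2[where f="(+)", OF key[OF assms(8) m1] key[OF assms(9) m2]])
  also have "\<dots> = (\<integral>\<omega>. indicator (A 1) \<omega> * g \<omega> ys1 + indicator (A 2) \<omega> * g \<omega> ys2 \<partial>M)"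
    by (rule Bochner_Integration.integral_add[symmetric]) (rule ii)+
  also have "\<dots> \<le> (\<integral>\<omega>. max (g \<omega> ys1) (g \<omega> ys2) \<partial>M)"
  proof (rule integral_mono)
    show "integrable M (\<lambda>\<omega>. indicator (A 1) \<omega> * g \<omega> ys1 + indicator (A 2) \<omega> * g \<omega> ys2)"
      by (intro Bochner_Integration.integrable_add ii)
    show "integrable M (\<lambda>\<omega>. max (g \<omega> ys1) (g \<omega> ys2))"
      using gi by (intro integrable_max)
    fix \<omega> assume w: "\<omega> \<in> space M"
    then have "r \<omega> = 1 \<or> r \<omega> = 2" using R by auto
    then show "indicator (A 1) \<omega> * g \<omega> ys1 + indicator (A 2) \<omega> * g \<omega> ys2 \<le> max (g \<omega> ys1) (g \<omega> ys2)"
    proof (elim disjE)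
      assume "r \<omega> = 1"
      then have "\<omega> \<in> A 1" "\<omega> \<notin> A 2" using w by (auto simp: A_def resp_event_def)
      then show ?thesis by simp
    next
      assume "r \<omega> = 2"
      then have "\<omega> \<notin> A 1" "\<omega> \<in> A 2" using w by (auto simp: A_def resp_event_def)
      then show ?thesis by simp
    qed
  qed
  finally show ?thesis unfolding EUBO_def .
qed

end
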